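(* Let $a<b$, $k>0$, $\lambda\in(0,\pi/2]$, $f\in C^3([a,b])$, and put $\mu_1=\sup_{t\in[a,b]}|f''(t)|$, $\mu_2=\sup_{t\in[a,b]}|f'''(t)|$. Let $\epsilon\in J_n$ for some $n\ge0$, and let $y_\epsilon$ be the solution of $\epsilon y''+ky=f(t)$ on $[a,b]$, $y'(a)=y'(b)=0$. Then for every $t_0\in[a,b]$, $$\Big|y_\epsilon(t_0)-\frac{f(t_0)}{k}\Big|\le\frac{1}{k\sin\lambda}\sqrt{\frac{\epsilon}{k}}\Big\{|f'(a)|+|f'(b)|+\sqrt{\frac{\epsilon}{k}}\big(|f''(a)|+\mu_2(b-a)\big)\Big\}+\frac1k\sqrt{\frac{\epsilon}{k}}\Big\{|f'(a)|+\sqrt{\frac{\epsilon}{k}}\big(\mu_1+|f''(a)|+\mu_2(b-a)\big)\Big\}.$$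
   Context: For a fixed constant $\lambda\in(0,\pi/2]$ and $n=0,1,2,\dots$ define the closed intervals $$J_n=\left[\,k\left(\frac{b-a}{(n+1)\pi-\lambda}\right)^2,\ k\left(\frac{b-a}{n\pi+\lambda}\right)^2\,\right].$$ Note that $\epsilon\in J_n$ iff $\sqrt{k/\epsilon}\,(b-a)\in[n\pi+\lambda,(n+1)\pi-\lambda]$. *)

theory Defs
  imports "HOL-Analysis.Analysis"
begin

definition J :: "real \<Rightarrow> real \<Rightarrow> real \<Rightarrow> real \<Rightarrow> nat \<Rightarrow> real set" where
  "J k a b lam n = {k * ((b - a) / ((real n + 1) * pi - lam))\<^sup>2 .. k * ((b - a) / (real n * pi + lam))\<^sup>2}"

end

theory Submission
  imports Defs
begin

lemma sin_lower:
  fixes lam x :: real and n :: nat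
  assumes "0 < lam" "lam \<le> pi/2" "real n * pi + lam \<le> x" "x \<le> (real n + 1) * pi - lam"
  shows "sin lam \<le> \<bar>sin x\<bar>"
proof -
  define z where "z = x - real n * pi"
  have z: "lam \<le> z" "z \<le> pi - lam" using assms by (auto simp: z_def algebra_simps)
  have "sin x = sin (real n * pi + z)" by (simp add: z_def)
  also have "\<dots> = (-1)^n * sin z" by (simp add: sin_add)
  finally have sx: "\<bar>sin x\<bar> = \<bar>sin z\<bar>" by (simp add: abs_mult)
  have "sin lam \<le> sin z"
  proof (cases "z \<le> pi/2")
    case True then show ?thesis using z assms by (intro sin_monotone_2pi_le) auto
  next
    case False
    then have "sin lam \<le> sin (pi - z)" using z assms by (intro sin_monotone_2pi_le) auto
    then show ?thesis by simp
  qed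
  moreover have "0 \<le> sin lam" using assms by (intro sin_ge_zero) auto
  ultimately show ?thesis using sx by linarith
qed

lemma derivH:
  fixes Y Yp Ypp F Fp Fpp Fppp :: "real \<Rightarrow> real" and S :: "real set"
  assumes "(Y has_real_derivative Yp s) (at s within S)"
   "(Yp has_real_derivative Ypp s) (at s within S)"
   "(F has_real_derivative Fp s) (at s within S)"
   "(Fp has_real_derivative Fpp s) (at s within S)"
   "(Fpp has_real_derivative Fppp s) (at s within S)"
   "Ypp s = w^2 * (F s / k - Y s)" "k > 0" "w > 0"
  shows "((\<lambda>s. (Yp s - Fp s/k) * sin(w*(t0-s)) + w*(Y s - F s/k)*cos(w*(t0-s)) + Fpp s * cos(w*(t0-s))/(k*w))
     has_real_derivative Fppp s * cos(w*(t0-s))/(k*w)) (at s within S)"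
  using assms(7-8) by (auto intro!: derivative_eq_intros assms(1-5) simp: assms(6) field_simps power2_eq_square)

lemma derivK:
  fixes Y Yp Ypp F Fp Fpp Fppp :: "real \<Rightarrow> real" and S :: "real set"
  assumes "(Y has_real_derivative Yp s) (at s within S)"
   "(Yp has_real_derivative Ypp s) (at s within S)"
   "(F has_real_derivative Fp s) (at s within S)"
   "(Fp has_real_derivative Fpp s) (at s within S)"
   "(Fpp has_real_derivative Fppp s) (at s within S)"
   "Ypp s = w^2 * (F s / k - Y s)" "k > 0" "w > 0"
  shows "((\<lambda>s. (Yp s - Fp s / k) * cos (w * (b - s)) - w * (Y s - F s / k) * sin (w * (b - s)) - Fpp s * sin (w * (b - s)) / (k * w))
     has_real_derivative (- Fppp s * sin(w*(b-s))/(k*w))) (at s within S)"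
  using assms(7-8) by (auto intro!: derivative_eq_intros assms(1-5) simp: assms(6) field_simps power2_eq_square)

lemma abs3: "\<bar>x + y + z\<bar> \<le> \<bar>x\<bar> + \<bar>y\<bar> + \<bar>z\<bar>" for x y z :: real by arith
lemma abs4: "\<bar>x + y + z + u\<bar> \<le> \<bar>x\<bar> + \<bar>y\<bar> + \<bar>z\<bar> + \<bar>u\<bar>" for x y z u :: real by arith

theorem mainTheorem3:
  fixes a b k lam \<epsilon> :: real and n :: nat
    and f f1 f2 f3 y y1 y2 :: "real \<Rightarrow> real"
  assumes ab: "a < b" and kpos: "k > 0"
    and lam: "0 < lam" "lam \<le> pi / 2"
    and f1: "\<And>t. t \<in> {a..b} \<Longrightarrow> (f has_real_derivative f1 t) (at t within {a..b})"
    and f2: "\<And>t. t \<in> {a..b} \<Longrightarrow> (f1 has_real_derivative f2 t) (at t within {a..b})"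
    and f3: "\<And>t. t \<in> {a..b} \<Longrightarrow> (f2 has_real_derivative f3 t) (at t within {a..b})"
    and f3c: "continuous_on {a..b} f3"
    and eps: "\<epsilon> \<in> J k a b lam n"
    and y1: "\<And>t. t \<in> {a..b} \<Longrightarrow> (y has_real_derivative y1 t) (at t within {a..b})"
    and y2: "\<And>t. t \<in> {a..b} \<Longrightarrow> (y1 has_real_derivative y2 t) (at t within {a..b})"
    and ode: "\<And>t. t \<in> {a..b} \<Longrightarrow> \<epsilon> * y2 t + k * y t = f t"
    and bc: "y1 a = 0" "y1 b = 0"
    and t0: "t0 \<in> {a..b}"
  shows "\<bar>y t0 - f t0 / k\<bar> \<le>
      1 / (k * sin lam) * sqrt (\<epsilon> / k) *
        (\<bar>f1 a\<bar> + \<bar>f1 b\<bar> + sqrt (\<epsilon> / k) * (\<bar>f2 a\<bar> + (SUP t\<in>{a..b}. \<bar>f3 t\<bar>) * (b - a)))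
    + 1 / k * sqrt (\<epsilon> / k) *
        (\<bar>f1 a\<bar> + sqrt (\<epsilon> / k) * ((SUP t\<in>{a..b}. \<bar>f2 t\<bar>) + \<bar>f2 a\<bar> + (SUP t\<in>{a..b}. \<bar>f3 t\<bar>) * (b - a)))"
proof -
  define L where "L = b - a"
  have Lpos: "L > 0" using ab by (simp add: L_def)
  define d1 where "d1 = real n * pi + lam"
  define d2 where "d2 = (real n + 1) * pi - lam"
  have d1pos: "d1 > 0" using lam by (simp add: d1_def add_nonneg_pos)
  have "0 \<le> pi * real n" by simp
  moreover have "d2 = pi * real n + pi - lam" by (simp add: d2_def algebra_simps)
  ultimately have d2pos: "d2 > 0" using lam pi_gt3 by linarith
  have e1: "k * (L / d2)\<^sup>2 \<le> \<epsilon>" and e2: "\<epsilon> \<le> k * (L / d1)\<^sup>2"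
    using eps by (auto simp: J_def L_def d1_def d2_def)
  have epos: "\<epsilon> > 0"
    using e1 kpos Lpos d2pos by (smt (verit) divide_pos_pos mult_pos_pos zero_less_power)
  define w where "w = sqrt (k / \<epsilon>)"
  have wpos: "w > 0" using kpos epos by (simp add: w_def)
  have w2: "w\<^sup>2 = k / \<epsilon>" using kpos epos by (simp add: w_def)
  have sq: "sqrt (\<epsilon> / k) = 1 / w"
    using kpos epos by (simp add: w_def real_sqrt_divide)
  have wL2: "(w * L)\<^sup>2 = k * L\<^sup>2 / \<epsilon>" by (simp add: power_mult_distrib w2)
  have "d1\<^sup>2 \<le> (w * L)\<^sup>2"
  proof -
    have "\<epsilon> * d1\<^sup>2 \<le> k * L\<^sup>2" using e2 d1pos by (simp add: power_divide field_simps)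
    then show ?thesis unfolding wL2 using epos by (simp add: field_simps)
  qed
  hence wL1: "d1 \<le> w * L" by (rule power2_le_imp_le) (use wpos Lpos in simp)
  have "(w * L)\<^sup>2 \<le> d2\<^sup>2"
  proof -
    have "k * L\<^sup>2 \<le> \<epsilon> * d2\<^sup>2" using e1 d2pos by (simp add: power_divide field_simps)
    then show ?thesis unfolding wL2 using epos by (simp add: field_simps)
  qed
  hence wL2': "w * L \<le> d2" by (rule power2_le_imp_le) (use d2pos in simp)
  have sinb: "sin lam \<le> \<bar>sin (w * L)\<bar>"
    using sin_lower[OF lam wL1[unfolded d1_def] wL2'[unfolded d2_def]] .
  have slpos: "sin lam > 0" using lam pi_gt3 by (intro sin_gt_zero) auto
  have ydd: "y2 s = w\<^sup>2 * (f s / k - y s)" if "s \<in> {a..b}" for s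
    using kpos epos by (simp add: w2 field_simps flip: ode[OF that])
  define M1 where "M1 = (SUP t\<in>{a..b}. \<bar>f2 t\<bar>)"
  define M2 where "M2 = (SUP t\<in>{a..b}. \<bar>f3 t\<bar>)"
  have f2c: "continuous_on {a..b} f2" by (rule DERIV_continuous_on[OF f3])
  have "bdd_above ((\<lambda>t. \<bar>f2 t\<bar>) ` {a..b})"
    by (intro bounded_imp_bdd_above compact_imp_bounded compact_continuous_image
        continuous_on_rabs f2c compact_Icc)
  hence M1b: "\<bar>f2 t\<bar> \<le> M1" if "t \<in> {a..b}" for t
    unfolding M1_def using that by (rule cSUP_upper2) simp
  have "bdd_above ((\<lambda>t. \<bar>f3 t\<bar>) ` {a..b})"
    by (intro bounded_imp_bdd_above compact_imp_bounded compact_continuous_image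
        continuous_on_rabs f3c compact_Icc)
  hence M2b: "\<bar>f3 t\<bar> \<le> M2" if "t \<in> {a..b}" for t
    unfolding M2_def using that by (rule cSUP_upper2) simp
  have aab: "a \<in> {a..b}" "b \<in> {a..b}" using ab by auto
  have kw: "k * w > 0" using kpos wpos by simp
  have absm: "\<bar>x * c\<bar> \<le> \<bar>x\<bar>" if "\<bar>c\<bar> \<le> 1" for x c :: real
    using that by (simp add: abs_mult mult_left_le)
  have boundD: "norm (g3 s * c s / (k * w)) \<le> M2 / (k * w)" if "s \<in> {a..b}" "\<bar>c s\<bar> \<le> 1"
    and "g3 = f3" for s and c g3
  proof -
    have "\<bar>f3 s * c s\<bar> \<le> M2" using absm[of "c s" "f3 s", OF that(2)] M2b[OF that(1)] by linarith
    then show ?thesis using kw that(3) by (simp add: divide_right_mono)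
  qed
  define H where "H = (\<lambda>s. (y1 s - f1 s/k) * sin(w*(t0-s)) + w*(y s - f s/k)*cos(w*(t0-s)) + f2 s * cos(w*(t0-s))/(k*w))"
  have "norm (H t0 - H a) \<le> M2 / (k * w) * norm (t0 - a)"
    unfolding H_def
  proof (rule field_differentiable_bound[where S="{a..b}" and f'="\<lambda>s. f3 s * cos (w * (t0 - s)) / (k * w)"])
    fix z assume z: "z \<in> {a..b}"
    show "((\<lambda>s. (y1 s - f1 s/k) * sin(w*(t0-s)) + w*(y s - f s/k)*cos(w*(t0-s)) + f2 s * cos(w*(t0-s))/(k*w))
      has_real_derivative f3 z * cos (w * (t0 - z)) / (k * w)) (at z within {a..b})"
      by (rule derivH[where Y=y and Yp=y1 and Ypp=y2 and F=f and Fp=f1 and Fpp=f2 and Fppp=f3 and s=z and S="{a..b}", OF y1[OF z] y2[OF z] f1[OF z] f2[OF z] f3[OF z] ydd[OF z] kpos wpos])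
    show "norm (f3 z * cos (w * (t0 - z)) / (k * w)) \<le> M2 / (k * w)"
      by (rule boundD[OF z _ refl]) simp
  qed (use t0 aab in auto)
  also have "\<dots> \<le> M2 / (k * w) * L"
    using t0 M2b[OF aab(1)] kw by (intro mult_left_mono) (auto simp: L_def)
  finally have Hb: "\<bar>H t0 - H a\<bar> \<le> M2 / (k * w) * L" by simp
  define ua where "ua = y a - f a / k"
  define ut where "ut = y t0 - f t0 / k"
  have Ht0: "H t0 = w * ut + f2 t0 / (k * w)" by (simp add: H_def ut_def)
  have Ha: "H a = (- f1 a / k) * sin (w*(t0-a)) + w * ua * cos (w*(t0-a)) + f2 a * cos (w*(t0-a)) / (k*w)"
    by (simp add: H_def ua_def bc)
  have Habs: "\<bar>H a\<bar> \<le> \<bar>f1 a\<bar> / k + w * \<bar>ua\<bar> + \<bar>f2 a\<bar> / (k*w)"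
  proof -
    define c where "c = w*(t0-a)"
    have Ha': "H a = (- f1 a / k) * sin c + (w * ua) * cos c + (f2 a / (k*w)) * cos c"
      by (simp add: Ha c_def)
    have 1: "\<bar>(- f1 a / k) * sin c\<bar> \<le> \<bar>f1 a\<bar> / k"
      using absm[of "sin c" "- f1 a / k"] kpos by simp
    have 2: "\<bar>(w * ua) * cos c\<bar> \<le> w * \<bar>ua\<bar>"
      using absm[of "cos c" "w * ua"] wpos by (simp add: abs_mult)
    have 3: "\<bar>(f2 a / (k*w)) * cos c\<bar> \<le> \<bar>f2 a\<bar> / (k*w)"
      using absm[of "cos c" "f2 a / (k*w)"] kw by simp
    show ?thesis unfolding Ha' using abs3[of "(- f1 a / k) * sin c" "(w * ua) * cos c" "(f2 a / (k*w)) * cos c"] 1 2 3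
      by linarith
  qed
  have f2t0: "\<bar>f2 t0 / (k*w)\<bar> \<le> M1 / (k*w)"
    using M1b[OF t0] kw by (simp add: divide_right_mono)
  have "w * \<bar>ut\<bar> \<le> \<bar>f1 a\<bar> / k + w * \<bar>ua\<bar> + \<bar>f2 a\<bar> / (k*w) + M1 / (k*w) + M2 / (k * w) * L"
  proof -
    have e: "w * ut = (H t0 - H a) + H a + (- (f2 t0 / (k * w)))" using Ht0 by simp
    have "\<bar>w * ut\<bar> \<le> \<bar>H t0 - H a\<bar> + \<bar>H a\<bar> + \<bar>- (f2 t0 / (k * w))\<bar>"
      unfolding e by (rule abs3)
    moreover have "\<bar>w * ut\<bar> = w * \<bar>ut\<bar>" using wpos by (simp add: abs_mult)
    moreover have "\<bar>- (f2 t0 / (k * w))\<bar> = \<bar>f2 t0 / (k * w)\<bar>" by (rule abs_minus_cancel)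
    ultimately show ?thesis using Hb f2t0 Habs by linarith
  qed
  hence ut_b: "\<bar>ut\<bar> \<le> \<bar>ua\<bar> + 1 / k * (1 / w) * (\<bar>f1 a\<bar> + (1/w) * (M1 + \<bar>f2 a\<bar> + M2 * L))"
    using wpos kpos by (simp add: field_simps)
  define K where "K = (\<lambda>s. (y1 s - f1 s / k) * cos (w * (b - s)) - w * (y s - f s / k) * sin (w * (b - s)) - f2 s * sin (w * (b - s)) / (k * w))"
  have "norm (K b - K a) \<le> M2 / (k * w) * norm (b - a)"
    unfolding K_def
  proof (rule field_differentiable_bound[where S="{a..b}" and f'="\<lambda>s. (- f3 s * sin (w * (b - s)) / (k * w))"])
    fix z assume z: "z \<in> {a..b}"
    show "((\<lambda>s. (y1 s - f1 s / k) * cos (w * (b - s)) - w * (y s - f s / k) * sin (w * (b - s)) - f2 s * sin (w * (b - s)) / (k * w))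
      has_real_derivative (- f3 z * sin (w * (b - z)) / (k * w))) (at z within {a..b})"
      by (rule derivK[where Y=y and Yp=y1 and Ypp=y2 and F=f and Fp=f1 and Fpp=f2 and Fppp=f3 and s=z and S="{a..b}", OF y1[OF z] y2[OF z] f1[OF z] f2[OF z] f3[OF z] ydd[OF z] kpos wpos])
    show "norm (- f3 z * sin (w * (b - z)) / (k * w)) \<le> M2 / (k * w)"
      using boundD[OF z _ refl, of "\<lambda>s. sin (w * (b - s))"] by simp
  qed (use aab in auto)
  hence Kb: "\<bar>K b - K a\<bar> \<le> M2 / (k * w) * L" using ab by (simp add: L_def)
  have Kbv: "K b = - f1 b / k" by (simp add: K_def bc)
  have Kav: "K a = (- f1 a / k) * cos (w * L) - w * ua * sin (w * L) - f2 a * sin (w * L) / (k * w)"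
    by (simp add: K_def bc ua_def L_def)
  have "w * \<bar>ua\<bar> * \<bar>sin (w * L)\<bar> \<le> \<bar>f1 b\<bar> / k + \<bar>f1 a\<bar> / k + \<bar>f2 a\<bar> / (k*w) + M2 / (k * w) * L"
  proof -
    have e: "w * ua * sin (w * L) = (K b - K a) + (- K b) + (- f1 a / k) * cos (w * L) + (- ((f2 a / (k * w)) * sin (w * L)))"
      unfolding Kav by (simp add: algebra_simps)
    have t: "\<bar>w * ua * sin (w * L)\<bar> \<le> \<bar>K b - K a\<bar> + \<bar>- K b\<bar> + \<bar>(- f1 a / k) * cos (w * L)\<bar> + \<bar>- ((f2 a / (k * w)) * sin (w * L))\<bar>"
      unfolding e by (rule abs4)
    have 1: "\<bar>(- f1 a / k) * cos (w * L)\<bar> \<le> \<bar>f1 a\<bar> / k"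
      using absm[of "cos (w * L)" "- f1 a / k"] kpos by simp
    have 2: "\<bar>- ((f2 a / (k * w)) * sin (w * L))\<bar> \<le> \<bar>f2 a\<bar> / (k*w)"
      using absm[of "sin (w * L)" "f2 a / (k*w)"] kw by simp
    have 3: "\<bar>- K b\<bar> = \<bar>f1 b\<bar> / k" using Kbv kpos by simp
    have 4: "\<bar>w * ua * sin (w * L)\<bar> = w * \<bar>ua\<bar> * \<bar>sin (w * L)\<bar>" using wpos by (simp add: abs_mult)
    show ?thesis using t 1 2 3 4 Kb by linarith
  qed
  hence "w * \<bar>ua\<bar> * sin lam \<le> \<bar>f1 b\<bar> / k + \<bar>f1 a\<bar> / k + \<bar>f2 a\<bar> / (k*w) + M2 / (k * w) * L"
    using sinb wpos by (smt (verit) mult_left_mono mult_nonneg_nonneg abs_ge_zero less_imp_le)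
  hence ua_b: "\<bar>ua\<bar> \<le> 1 / (k * sin lam) * (1 / w) * (\<bar>f1 a\<bar> + \<bar>f1 b\<bar> + (1/w) * (\<bar>f2 a\<bar> + M2 * L))"
    using wpos kpos slpos by (simp add: field_simps)
  have "\<bar>ut\<bar> \<le> 1 / (k * sin lam) * (1 / w) * (\<bar>f1 a\<bar> + \<bar>f1 b\<bar> + (1/w) * (\<bar>f2 a\<bar> + M2 * L))
      + 1 / k * (1 / w) * (\<bar>f1 a\<bar> + (1/w) * (M1 + \<bar>f2 a\<bar> + M2 * L))"
    using ut_b ua_b by linarith
  thus ?thesis by (simp add: ut_def sq M1_def M2_def L_def)
qed

end
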